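(* For every amalgamation try $\mathbf{x}$, $\mathbf{j}_{\mathbf{x},1}(G_{\mathbf{x},1}) \cap \mathbf{j}_{\mathbf{x},2}(G_{\mathbf{x},2}) = \mathbf{j}_{\mathbf{x},0}(G_{\mathbf{x},0})$.
   Context: A group is locally finite if every finitely generated subgroup is finite. An amalgamation try is a quintuple $\mathbf{x} = (G_0,G_1,G_2,\mathbf{I}_1,\mathbf{I}_2)$, written $G_{\mathbf{x},\ell} = G_\ell$, $\mathbf{I}_{\mathbf{x},\ell} = \mathbf{I}_\ell$, such that: $G_1, G_2$ are locally finite groups and $G_0$ is a subgroup of both; for $\ell = 1,2$, $\mathbf{I}_\ell \subseteq G_\ell$ is a set of representatives of the left cosets of $G_0$ in $G_\ell$ (without repetitions); and $e \in \mathbf{I}_1 \cap \mathbf{I}_2$. Let $\mathcal{U}_{\mathbf{x}} = \{(g_0,g_1,g_2) : g_0 \in G_0, g_1 \in \mathbf{I}_1, g_2 \in \mathbf{I}_2\}$. For $g \in G_\ell$ define $\mathbf{j}_{\mathbf{x},\ell}(g) : \mathcal{U}_{\mathbf{x}} \to \mathcal{U}_{\mathbf{x}}$, $(g_0,g_1,g_2) \mapsto (g_0',g_1',g_2')$: for $\ell = 0$: $(g_0g,g_1,g_2)$; for $\ell = 1$: $g_2' = g_2$ and $(g_1',g_0') \in \mathbf{I}_1 \times G_0$ is unique with $g_1' g_0' = g_1 g_0 g$ in $G_1$; for $\ell = 2$: $g_1' = g_1$ and $(g_2',g_0') \in \mathbf{I}_2 \times G_0$ is unique with $g_2' g_0'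 = g_2 g_0 g$ in $G_2$. Permutations act on the right (product $f_1f_2$ is $u \mapsto f_2(f_1(u))$), and $G_{\mathbf{x}}$ is the permutation group on $\mathcal{U}_{\mathbf{x}}$ generated by $\mathbf{j}_{\mathbf{x},1}(G_1) \cup \mathbf{j}_{\mathbf{x},2}(G_2)$; the maps $\mathbf{j}_{\mathbf{x},\ell}$ are group embeddings into $G_{\mathbf{x}}$ (for $\ell=0$ via $\mathbf{j}_{\mathbf{x},0} = \mathbf{j}_{\mathbf{x},1}\restriction G_0$). *)

theory Defs
  imports "HOL-Algebra.Algebra"
begin

definition locally_finite_group :: "('a, 'b) monoid_scheme \<Rightarrow> bool" where
  "locally_finite_group G \<longleftrightarrow> group G \<and>
     (\<forall>S. finite S \<and> S \<subseteq> carrier G \<longrightarrow> finite (generate G S))"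

definition left_coset_reps :: "('a, 'b) monoid_scheme \<Rightarrow> 'a set \<Rightarrow> 'a set \<Rightarrow> bool" where
  "left_coset_reps G H I \<longleftrightarrow> I \<subseteq> carrier G \<and>
     (\<forall>g \<in> carrier G. \<exists>!i. i \<in> I \<and> i \<in> l_coset G g H)"

text \<open>Amalgamation try (G0, G1, G2, I1, I2): G0 is given as a common subset H of the
  carriers of G1 and G2 which is a subgroup of both, with the two group operations
  agreeing on it.\<close>
definition amalgamation_try ::
  "'a set \<Rightarrow> ('a, 'b) monoid_scheme \<Rightarrow> ('a, 'c) monoid_scheme \<Rightarrow> 'a set \<Rightarrow> 'a set \<Rightarrow> bool" where
  "amalgamation_try H G1 G2 I1 I2 \<longleftrightarrow>
     locally_finite_group G1 \<and> locally_finite_group G2 \<and>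
     subgroup H G1 \<and> subgroup H G2 \<and>
     (\<forall>x \<in> H. \<forall>y \<in> H. x \<otimes>\<^bsub>G1\<^esub> y = x \<otimes>\<^bsub>G2\<^esub> y) \<and>
     left_coset_reps G1 H I1 \<and> left_coset_reps G2 H I2 \<and>
     \<one>\<^bsub>G1\<^esub> \<in> I1 \<and> \<one>\<^bsub>G2\<^esub> \<in> I2"

definition amalg_U :: "'a set \<Rightarrow> 'a set \<Rightarrow> 'a set \<Rightarrow> ('a \<times> 'a \<times> 'a) set" where
  "amalg_U H I1 I2 = H \<times> I1 \<times> I2"

definition amalg_j0 ::
  "'a set \<Rightarrow> ('a, 'b) monoid_scheme \<Rightarrow> 'a set \<Rightarrow> 'a set \<Rightarrow> 'a \<Rightarrow> ('a \<times> 'a \<times> 'a \<Rightarrow> 'a \<times> 'a \<times> 'a)" where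
  "amalg_j0 H G1 I1 I2 g =
     (\<lambda>(g0, g1, g2) \<in> amalg_U H I1 I2. (g0 \<otimes>\<^bsub>G1\<^esub> g, g1, g2))"

definition amalg_j1 ::
  "'a set \<Rightarrow> ('a, 'b) monoid_scheme \<Rightarrow> 'a set \<Rightarrow> 'a set \<Rightarrow> 'a \<Rightarrow> ('a \<times> 'a \<times> 'a \<Rightarrow> 'a \<times> 'a \<times> 'a)" where
  "amalg_j1 H G1 I1 I2 g =
     (\<lambda>(g0, g1, g2) \<in> amalg_U H I1 I2.
        let (g1', g0') = (THE p. fst p \<in> I1 \<and> snd p \<in> H \<and>
                              fst p \<otimes>\<^bsub>G1\<^esub> snd p = g1 \<otimes>\<^bsub>G1\<^esub> g0 \<otimes>\<^bsub>G1\<^esub> g)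
        in (g0', g1', g2))"

definition amalg_j2 ::
  "'a set \<Rightarrow> ('a, 'b) monoid_scheme \<Rightarrow> 'a set \<Rightarrow> 'a set \<Rightarrow> 'a \<Rightarrow> ('a \<times> 'a \<times> 'a \<Rightarrow> 'a \<times> 'a \<times> 'a)" where
  "amalg_j2 H G2 I1 I2 g =
     (\<lambda>(g0, g1, g2) \<in> amalg_U H I1 I2.
        let (g2', g0') = (THE p. fst p \<in> I2 \<and> snd p \<in> H \<and>
                              fst p \<otimes>\<^bsub>G2\<^esub> snd p = g2 \<otimes>\<^bsub>G2\<^esub> g0 \<otimes>\<^bsub>G2\<^esub> g)
        in (g0', g1, g2'))"

end

theory Submission
  imports Defs
begin

lemma decomp_ex1:
  fixes G (structure)
  assumes G: "group G" and S: "subgroup H G" and R: "left_coset_reps G H I"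
    and x: "x \<in> carrier G"
  shows "\<exists>!p. fst p \<in> I \<and> snd p \<in> H \<and> fst p \<otimes>\<^bsub>G\<^esub> snd p = x"
proof -
  interpret group G by (rule G)
  have HG: "H \<subseteq> carrier G" by (rule subgroup.subset[OF S])
  have IG: "I \<subseteq> carrier G" using R unfolding left_coset_reps_def by simp
  have EX: "\<exists>!i. i \<in> I \<and> i \<in> x <# H"
    using R x unfolding left_coset_reps_def by simp
  then obtain i where i0: "i \<in> I \<and> i \<in> x <# H" and iu0: "\<forall>j. j \<in> I \<and> j \<in> x <# H \<longrightarrow> j = i"
    unfolding Ex1_def by blast
  have i: "i \<in> I" "i \<in> x <# H" using i0 by auto
  have iu: "\<And>j. j \<in> I \<and> j \<in> x <# H \<Longrightarrow> j = i" using iu0 by blast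
  from i(2) obtain h where h: "h \<in> H" "i = x \<otimes> h" unfolding l_coset_def by (auto simp: UN_iff)
  have hc: "h \<in> carrier G" using h HG by (simp add: subsetD)
  have ih: "inv h \<in> H" by (rule subgroup.m_inv_closed[OF S h(1)])
  have e1: "i \<otimes> inv h = x" unfolding h(2) using hc x by (simp add: m_assoc)
  show ?thesis
  proof (rule ex1I[of _ "(i, inv h)"])
    show "fst (i, inv h) \<in> I \<and> snd (i, inv h) \<in> H \<and> fst (i, inv h) \<otimes> snd (i, inv h) = x"
      using i ih e1 by simp
  next
    fix p assume p: "fst p \<in> I \<and> snd p \<in> H \<and> fst p \<otimes> snd p = x"
    obtain a b where ab: "p = (a, b)" by (cases p)
    have a: "a \<in> I" "b \<in> H" "a \<otimes> b = x" using p ab by auto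
    have bc: "b \<in> carrier G" using a HG by (simp add: subsetD)
    have ac: "a \<in> carrier G" using a IG by (simp add: subsetD)
    have "x \<otimes> inv b = a" unfolding a(3)[symmetric] using ac bc by (simp add: m_assoc)
    moreover have "inv b \<in> H" by (rule subgroup.m_inv_closed[OF S a(2)])
    ultimately have "a \<in> x <# H" unfolding l_coset_def by auto
    hence aeq: "a = i" using iu a(1) by simp
    have "b = inv h"
    proof -
      have "a \<otimes> b = a \<otimes> inv h" using a aeq e1 by simp
      thus ?thesis using ac bc hc by simp
    qed
    thus "p = (i, inv h)" using ab aeq by simp
  qed
qed


lemma the_decomp:
  assumes G: "group G" and S: "subgroup H G" and R: "left_coset_reps G H I"
    and x: "x \<in> carrier G" and a: "a \<in> I" "b \<in> H" "a \<otimes>\<^bsub>G\<^esub> b = x"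
  shows "(THE p. fst p \<in> I \<and> snd p \<in> H \<and> fst p \<otimes>\<^bsub>G\<^esub> snd p = x) = (a, b)"
  apply (rule the1_equality[OF decomp_ex1[OF G S R x]])
  using a by simp

lemma the_decomp_prop:
  assumes G: "group G" and S: "subgroup H G" and R: "left_coset_reps G H I"
    and x: "x \<in> carrier G"
  shows "fst (THE p. fst p \<in> I \<and> snd p \<in> H \<and> fst p \<otimes>\<^bsub>G\<^esub> snd p = x) \<in> I \<and>
         snd (THE p. fst p \<in> I \<and> snd p \<in> H \<and> fst p \<otimes>\<^bsub>G\<^esub> snd p = x) \<in> H \<and>
         fst (THE p. fst p \<in> I \<and> snd p \<in> H \<and> fst p \<otimes>\<^bsub>G\<^esub> snd p = x) \<otimes>\<^bsub>G\<^esub>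
         snd (THE p. fst p \<in> I \<and> snd p \<in> H \<and> fst p \<otimes>\<^bsub>G\<^esub> snd p = x) = x"
  by (rule theI'[OF decomp_ex1[OF G S R x]])

theorem claim2p4:
  fixes H :: "'a set" and G1 :: "('a, 'b) monoid_scheme" and G2 :: "('a, 'c) monoid_scheme"
    and I1 I2 :: "'a set"
  assumes "amalgamation_try H G1 G2 I1 I2"
  shows "amalg_j1 H G1 I1 I2 ` carrier G1 \<inter> amalg_j2 H G2 I1 I2 ` carrier G2
           = amalg_j0 H G1 I1 I2 ` H"
proof -
  have A: "locally_finite_group G1 \<and> locally_finite_group G2 \<and>
     subgroup H G1 \<and> subgroup H G2 \<and>
     (\<forall>x \<in> H. \<forall>y \<in> H. x \<otimes>\<^bsub>G1\<^esub> y = x \<otimes>\<^bsub>G2\<^esub> y) \<and>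
     left_coset_reps G1 H I1 \<and> left_coset_reps G2 H I2 \<and>
     \<one>\<^bsub>G1\<^esub> \<in> I1 \<and> \<one>\<^bsub>G2\<^esub> \<in> I2"
    using assms unfolding amalgamation_try_def .
  have G1: "group G1" and G2: "group G2"
    using A unfolding locally_finite_group_def by simp_all
  have S1: "subgroup H G1" and S2: "subgroup H G2"
    and op: "\<And>x y. x \<in> H \<Longrightarrow> y \<in> H \<Longrightarrow> x \<otimes>\<^bsub>G1\<^esub> y = x \<otimes>\<^bsub>G2\<^esub> y"
    and R1: "left_coset_reps G1 H I1" and R2: "left_coset_reps G2 H I2"
    and e1: "\<one>\<^bsub>G1\<^esub> \<in> I1" and e2: "\<one>\<^bsub>G2\<^esub> \<in> I2"
    using A by simp_all
  interpret g1: group G1 by (rule G1)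
  interpret g2: group G2 by (rule G2)
  have H1: "H \<subseteq> carrier G1" by (rule subgroup.subset[OF S1])
  have H2: "H \<subseteq> carrier G2" by (rule subgroup.subset[OF S2])
  have I1c: "I1 \<subseteq> carrier G1" using R1 unfolding left_coset_reps_def by simp
  have I2c: "I2 \<subseteq> carrier G2" using R2 unfolding left_coset_reps_def by simp
  have oneH: "\<one>\<^bsub>G1\<^esub> \<in> H" by (rule subgroup.one_closed[OF S1])
  have oneeq: "\<one>\<^bsub>G1\<^esub> = \<one>\<^bsub>G2\<^esub>"
  proof -
    have oc: "\<one>\<^bsub>G1\<^esub> \<in> carrier G2" using oneH H2 by (simp add: subsetD)
    have "\<one>\<^bsub>G1\<^esub> \<otimes>\<^bsub>G2\<^esub> \<one>\<^bsub>G1\<^esub> = \<one>\<^bsub>G1\<^esub> \<otimes>\<^bsub>G2\<^esub> \<one>\<^bsub>G2\<^esub>"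
      using op[OF oneH oneH] oc by simp
    thus ?thesis using oc g2.l_cancel by simp
  qed
  have j10: "amalg_j1 H G1 I1 I2 h = amalg_j0 H G1 I1 I2 h" if h: "h \<in> H" for h
  proof
    fix u show "amalg_j1 H G1 I1 I2 h u = amalg_j0 H G1 I1 I2 h u"
    proof (cases "u \<in> amalg_U H I1 I2")
      case True
      then obtain g0 g1 g2 where u: "u = (g0, g1, g2)" "g0 \<in> H" "g1 \<in> I1" "g2 \<in> I2"
        unfolding amalg_U_def by auto
      have c: "g0 \<in> carrier G1" "g1 \<in> carrier G1" "h \<in> carrier G1"
        using u h H1 I1c by (auto simp: subsetD)
      have cl: "g0 \<otimes>\<^bsub>G1\<^esub> h \<in> H" by (rule subgroup.m_closed[OF S1 u(2) h])
      have "(THE p. fst p \<in> I1 \<and> snd p \<in> H \<and> fst p \<otimes>\<^bsub>G1\<^esub> snd p = g1 \<otimes>\<^bsub>G1\<^esub> g0 \<otimes>\<^bsub>G1\<^esub> h)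
            = (g1, g0 \<otimes>\<^bsub>G1\<^esub> h)"
        apply (rule the_decomp[OF G1 S1 R1])
        using c u cl by (simp_all add: g1.m_assoc)
      thus ?thesis using True u unfolding amalg_j1_def amalg_j0_def by simp
    next
      case False thus ?thesis unfolding amalg_j1_def amalg_j0_def by simp
    qed
  qed
  have j20: "amalg_j2 H G2 I1 I2 h = amalg_j0 H G1 I1 I2 h" if h: "h \<in> H" for h
  proof
    fix u show "amalg_j2 H G2 I1 I2 h u = amalg_j0 H G1 I1 I2 h u"
    proof (cases "u \<in> amalg_U H I1 I2")
      case True
      then obtain g0 g1 g2 where u: "u = (g0, g1, g2)" "g0 \<in> H" "g1 \<in> I1" "g2 \<in> I2"
        unfolding amalg_U_def by auto
      have c: "g0 \<in> carrier G2" "g2 \<in> carrier G2" "h \<in> carrier G2"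
        using u h H2 I2c by (auto simp: subsetD)
      have cl: "g0 \<otimes>\<^bsub>G2\<^esub> h \<in> H" by (rule subgroup.m_closed[OF S2 u(2) h])
      have "(THE p. fst p \<in> I2 \<and> snd p \<in> H \<and> fst p \<otimes>\<^bsub>G2\<^esub> snd p = g2 \<otimes>\<^bsub>G2\<^esub> g0 \<otimes>\<^bsub>G2\<^esub> h)
            = (g2, g0 \<otimes>\<^bsub>G2\<^esub> h)"
        apply (rule the_decomp[OF G2 S2 R2])
        using c u cl by (simp_all add: g2.m_assoc)
      moreover have "g0 \<otimes>\<^bsub>G2\<^esub> h = g0 \<otimes>\<^bsub>G1\<^esub> h" using op[OF u(2) h] by simp
      ultimately show ?thesis using True u unfolding amalg_j2_def amalg_j0_def by simp
    next
      case False thus ?thesis unfolding amalg_j2_def amalg_j0_def by simp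
    qed
  qed
  show ?thesis
  proof
    show "amalg_j0 H G1 I1 I2 ` H \<subseteq> amalg_j1 H G1 I1 I2 ` carrier G1 \<inter> amalg_j2 H G2 I1 I2 ` carrier G2"
    proof
      fix f assume "f \<in> amalg_j0 H G1 I1 I2 ` H"
      then obtain h where h: "h \<in> H" "f = amalg_j0 H G1 I1 I2 h" by blast
      have "h \<in> carrier G1" "h \<in> carrier G2" using h H1 H2 by (auto simp: subsetD)
      hence "f \<in> amalg_j1 H G1 I1 I2 ` carrier G1" "f \<in> amalg_j2 H G2 I1 I2 ` carrier G2"
        using h j10[OF h(1)] j20[OF h(1)] by (auto intro!: image_eqI)
      thus "f \<in> amalg_j1 H G1 I1 I2 ` carrier G1 \<inter> amalg_j2 H G2 I1 I2 ` carrier G2" by simp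
    qed
  next
    show "amalg_j1 H G1 I1 I2 ` carrier G1 \<inter> amalg_j2 H G2 I1 I2 ` carrier G2 \<subseteq> amalg_j0 H G1 I1 I2 ` H"
    proof
      fix f assume "f \<in> amalg_j1 H G1 I1 I2 ` carrier G1 \<inter> amalg_j2 H G2 I1 I2 ` carrier G2"
      then obtain a b where a: "a \<in> carrier G1" "f = amalg_j1 H G1 I1 I2 a"
        and b: "b \<in> carrier G2" "f = amalg_j2 H G2 I1 I2 b" by blast
      let ?e = "\<one>\<^bsub>G1\<^esub>"
      have uU: "(?e, ?e, ?e) \<in> amalg_U H I1 I2"
        unfolding amalg_U_def using oneH e1 e2 oneeq by simp
      have x1: "?e \<otimes>\<^bsub>G1\<^esub> ?e \<otimes>\<^bsub>G1\<^esub> a = a" using a by simp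
      have x2: "?e \<otimes>\<^bsub>G2\<^esub> ?e \<otimes>\<^bsub>G2\<^esub> b = b" using b oneeq by simp
      define p where "p = (THE p. fst p \<in> I1 \<and> snd p \<in> H \<and> fst p \<otimes>\<^bsub>G1\<^esub> snd p = a)"
      define q where "q = (THE p. fst p \<in> I2 \<and> snd p \<in> H \<and> fst p \<otimes>\<^bsub>G2\<^esub> snd p = b)"
      have pp: "fst p \<in> I1 \<and> snd p \<in> H \<and> fst p \<otimes>\<^bsub>G1\<^esub> snd p = a"
        unfolding p_def by (rule the_decomp_prop[OF G1 S1 R1 a(1)])
      have qq: "fst q \<in> I2 \<and> snd q \<in> H \<and> fst q \<otimes>\<^bsub>G2\<^esub> snd q = b"
        unfolding q_def by (rule the_decomp_prop[OF G2 S2 R2 b(1)])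
      have f1: "f (?e, ?e, ?e) = (snd p, fst p, ?e)"
        using uU a(1) unfolding a(2) amalg_j1_def p_def by (simp add: case_prod_beta)
      have f2: "f (?e, ?e, ?e) = (snd q, ?e, fst q)"
        using uU b(1) unfolding b(2) amalg_j2_def q_def by (simp add: case_prod_beta oneeq)
      have "fst p = ?e" using f1 f2 by simp
      hence "a = snd p" using pp H1 by (auto simp: subsetD)
      hence aH: "a \<in> H" using pp by simp
      have "f = amalg_j0 H G1 I1 I2 a" using a(2) j10[OF aH] by simp
      thus "f \<in> amalg_j0 H G1 I1 I2 ` H" using aH by blast
    qed
  qed
qed

end
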